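(* Let $q,r,\nu$ be positive integers with $\nu\le q$. Then the matrix $K(z)=I_\nu\otimes F(z)+S_\nu\otimes F'(z)\in\mathbb{C}^{\nu r\times\nu(r-1)}$ has rank $\nu(r-1)$ and satisfies $\mathcal{N}^0(z)K(z)=0$ for all $z$; in other words, the columns of $K(z)$ form a basis of the kernel of $\mathcal{N}^0(z)$. (For $r=1$, $K(z)$ is empty and by convention its columns span $\{0\}$.)
   Context: Matrix indices start at $0$. $u(z)=(1,z,\dots,z^{q-1})^\top$, $w(z)=(1,z,\dots,z^{r-1})$, $M(z)=u(z)w(z)\in\mathbb{C}^{q\times r}$ and $\mathcal{N}^0(z)=\big(M(z),\frac{1}{1!}M'(z),\dots,\frac{1}{(\nu-1)!}M^{(\nu-1)}(z)\big)\in\mathbb{C}^{q\times\nu r}$. $F(z)\in\mathbb{C}^{r\times(r-1)}$ has entries $F_{ii}=-z$, $F_{i+1,i}=1$, and $0$ otherwise; $F'(z)$ is its derivative in $z$. $S_\nu$ is the $\nu\times\nu$ shift matrix with $(S_\nu)_{ij}=\delta_{i+1,j}$. Thus $K(z)$ is block upper bidiagonal with blocks $F(z)$ on the diagonal and $F'(z)$ on the block superdiagonal. *)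

theory Defs
  imports Complex_Main "HOL-Analysis.Derivative" "Jordan_Normal_Form.DL_Rank" "Jordan_Normal_Form.Matrix_Kernel"
begin

definition kron :: "'a :: times mat \<Rightarrow> 'a mat \<Rightarrow> 'a mat" where
  "kron A B = mat (dim_row A * dim_row B) (dim_col A * dim_col B)
     (\<lambda>(i,j). A $$ (i div dim_row B, j div dim_col B) * B $$ (i mod dim_row B, j mod dim_col B))"

definition Mmat :: "nat \<Rightarrow> nat \<Rightarrow> complex \<Rightarrow> complex mat" where
  "Mmat q r z = mat q 1 (\<lambda>(i,_). z ^ i) * mat 1 r (\<lambda>(_,k). z ^ k)"

text \<open>N^0(z) = (M(z), M'(z)/1!, ..., M^(nu-1)(z)/(nu-1)!), a q x (nu r) matrix;
  derivatives are taken entrywise.\<close>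
definition N0 :: "nat \<Rightarrow> nat \<Rightarrow> nat \<Rightarrow> complex \<Rightarrow> complex mat" where
  "N0 q r \<nu> z = mat q (\<nu> * r)
     (\<lambda>(i,j). (deriv ^^ (j div r)) (\<lambda>w. Mmat q r w $$ (i, j mod r)) z / fact (j div r))"

definition Fmat :: "nat \<Rightarrow> complex \<Rightarrow> complex mat" where
  "Fmat r z = mat r (r - 1) (\<lambda>(i,j). if i = j then - z else if i = j + 1 then 1 else 0)"

definition Fderiv :: "nat \<Rightarrow> complex \<Rightarrow> complex mat" where
  "Fderiv r z = mat r (r - 1) (\<lambda>(i,j). deriv (\<lambda>w. Fmat r w $$ (i,j)) z)"

definition shift_mat :: "nat \<Rightarrow> complex mat" where
  "shift_mat \<nu> = mat \<nu> \<nu> (\<lambda>(i,j). if j = i + 1 then 1 else 0)"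

definition Kmat :: "nat \<Rightarrow> nat \<Rightarrow> complex \<Rightarrow> complex mat" where
  "Kmat \<nu> r z = kron (1\<^sub>m \<nu>) (Fmat r z) + kron (shift_mat \<nu>) (Fderiv r z)"

end

theory Submission
  imports Defs
begin

lemma deriv_pow_iter:
  "(deriv ^^ b) (\<lambda>w::complex. w ^ n) = (\<lambda>w. of_nat (fact b * (n choose b)) * w ^ (n - b))"
proof (induction b)
  case 0 then show ?case by simp
next
  case (Suc b)
  have D: "deriv (\<lambda>w::complex. of_nat (fact b * (n choose b)) * w ^ (n - b)) w =
        of_nat (fact b * (n choose b)) * (of_nat (n - b) * w ^ (n - b - 1))" for w
    by (rule DERIV_imp_deriv) (auto intro!: derivative_eq_intros)
  have C: "fact b * (n choose b) * (n - b) = fact (Suc b) * (n choose Suc b)"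
  proof -
    have "(n - b) * (n choose b) = (Suc b) * (n choose Suc b)"
      by (metis binomial_absorb_comp binomial_absorption) 
    then show ?thesis by (simp add: algebra_simps)
  qed
  have "deriv ((deriv ^^ b) (\<lambda>w::complex. w ^ n)) w = of_nat (fact (Suc b) * (n choose Suc b)) * w ^ (n - Suc b)" for w
  proof -
    have "deriv ((deriv ^^ b) (\<lambda>w::complex. w ^ n)) w = of_nat (fact b * (n choose b)) * (of_nat (n - b) * w ^ (n - b - 1))"
      using Suc D by simp
    also have "\<dots> = of_nat (fact b * (n choose b) * (n - b)) * w ^ (n - Suc b)"
      by (simp only: of_nat_mult mult.assoc) (simp add: diff_diff_add)
    also have "\<dots> = of_nat (fact (Suc b) * (n choose Suc b)) * w ^ (n - Suc b)"
      by (simp only: C)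
    finally show ?thesis .
  qed
  then show ?case by auto
qed

lemma sum_single:
  assumes "finite A" "j \<in> A" "\<And>k. k \<in> A \<Longrightarrow> k \<noteq> j \<Longrightarrow> g k = 0"
  shows "sum g A = g j"
  using sum.remove[OF assms(1,2), of g] assms(3) by (simp add: sum.neutral)

lemma inj_crit:
  fixes A :: "'a::field mat"
  assumes A: "A \<in> carrier_mat n m" and x: "x \<in> carrier_vec m" and Ax: "A *\<^sub>v x = 0\<^sub>v n"
    and sig: "\<And>j. j < m \<Longrightarrow> \<sigma> j < n"
    and inj: "inj_on (\<rho> \<circ> \<sigma>) {..<m}"
    and diag: "\<And>j. j < m \<Longrightarrow> A $$ (\<sigma> j, j) \<noteq> 0"
    and tri: "\<And>i j. i < n \<Longrightarrow> j < m \<Longrightarrow> A $$ (i,j) \<noteq> 0 \<Longrightarrow> i \<noteq> \<sigma> j \<Longrightarrow> (\<rho> i :: nat) < \<rho> (\<sigma> j)"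
  shows "x = 0\<^sub>v m"
proof (rule ccontr)
  assume ne: "x \<noteq> 0\<^sub>v m"
  define S where "S = {j. j < m \<and> x $ j \<noteq> 0}"
  have "S \<noteq> {}" using ne x unfolding S_def by (auto simp: vec_eq_iff)
  moreover have fS: "finite S" unfolding S_def by auto
  ultimately have "Max ((\<rho> \<circ> \<sigma>) ` S) \<in> (\<rho> \<circ> \<sigma>) ` S" by (intro Max_in) auto
  then obtain j where jS: "j \<in> S" and jM: "(\<rho> \<circ> \<sigma>) j = Max ((\<rho> \<circ> \<sigma>) ` S)" by force
  have jmax: "\<rho> (\<sigma> j') \<le> \<rho> (\<sigma> j)" if "j' \<in> S" for j'
  proof -
    have "(\<rho> \<circ> \<sigma>) j' \<le> Max ((\<rho> \<circ> \<sigma>) ` S)" using fS that by (intro Max_ge) auto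
    then show ?thesis using jM by simp
  qed
  have jm: "j < m" and xj: "x $ j \<noteq> 0" using jS unfolding S_def by auto
  have "0 = (A *\<^sub>v x) $ \<sigma> j" using Ax sig[OF jm] by simp
  also have "\<dots> = (\<Sum>k<m. A $$ (\<sigma> j, k) * x $ k)"
    using A x sig[OF jm] by (auto simp: scalar_prod_def lessThan_atLeast0)
  also have "\<dots> = A $$ (\<sigma> j, j) * x $ j"
  proof (rule sum_single)
    fix k assume k: "k \<in> {..<m}" "k \<noteq> j"
    show "A $$ (\<sigma> j, k) * x $ k = 0"
    proof (rule ccontr)
      assume "A $$ (\<sigma> j, k) * x $ k \<noteq> 0"
      then have a: "A $$ (\<sigma> j, k) \<noteq> 0" and b: "x $ k \<noteq> 0" by auto
      have neq: "\<sigma> j \<noteq> \<sigma> k" using inj k jm by (metis comp_apply inj_on_def lessThan_iff)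
      have "\<rho> (\<sigma> j) < \<rho> (\<sigma> k)" using tri[OF sig[OF jm] _ a neq] k by auto
      moreover have "k \<in> S" using b k unfolding S_def by auto
      ultimately show False using jmax by fastforce
    qed
  qed (use jm in auto)
  finally show False using diag[OF jm] xj by simp
qed

lemma inj_distinct_cols:
  fixes A :: "'a::field mat"
  assumes A: "A \<in> carrier_mat n m"
    and inj: "\<And>x :: 'a Matrix.vec. x \<in> carrier_vec m \<Longrightarrow> A *\<^sub>v x = 0\<^sub>v n \<Longrightarrow> x = 0\<^sub>v m"
  shows "distinct (cols A)"
proof -
  have "cols A ! i \<noteq> cols A ! j" if ij: "i < m" "j < m" "i \<noteq> j" for i j
  proof
    assume eq: "cols A ! i = cols A ! j"
    define x where "x = (unit_vec m i - unit_vec m j :: 'a Matrix.vec)"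
    have xc: "x \<in> carrier_vec m" unfolding x_def by auto
    have "A *\<^sub>v x = 0\<^sub>v n"
    proof (rule eq_vecI)
      fix l assume "l < dim_vec (0\<^sub>v n :: 'a vec)"
      then have l: "l < n" by simp
      have "(A *\<^sub>v x) $ l = row A l \<bullet> unit_vec m i - row A l \<bullet> unit_vec m j"
        using A l unfolding x_def
        by (simp add: scalar_prod_minus_distrib[of _ m])
      also have "\<dots> = A $$ (l,i) - A $$ (l,j)" using A l ij by simp
      also have "\<dots> = 0" using eq A l ij by (metis cols_length cols_nth carrier_matD index_col right_minus_eq)
      finally show "(A *\<^sub>v x) $ l = 0\<^sub>v n $ l" using l by simp
    qed (use A in simp)
    then have "x = 0\<^sub>v m" using inj xc by blast
    then have "x $ i = 0" using ij by simp
    then show False using ij unfolding x_def by simp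
  qed
  then show ?thesis using A unfolding distinct_conv_nth by auto
qed

lemma inj_full_rank:
  fixes A :: "'a::field mat"
  assumes A: "A \<in> carrier_mat n m"
    and inj: "\<And>x :: 'a Matrix.vec. x \<in> carrier_vec m \<Longrightarrow> A *\<^sub>v x = 0\<^sub>v n \<Longrightarrow> x = 0\<^sub>v m"
  shows "vec_space.rank n A = m"
proof -
  interpret vec_space "TYPE('a)" n .
  have d: "distinct (cols A)" by (rule inj_distinct_cols[OF A inj])
  have "lin_indpt (set (cols A))"
  proof
    assume "lin_dep (set (cols A))"
    then obtain v where "v \<in> carrier_vec m" "v \<noteq> 0\<^sub>v m" "A *\<^sub>v v = 0\<^sub>v n"
      using lin_depE[OF A _ d] by blast
    then show False using inj by blast
  qed
  then show ?thesis using lin_indpt_full_rank[OF A d] by blast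
qed

lemma divmod_eq_iff:
  fixes a c k m r :: nat
  assumes "k < r" "m < r"
  shows "(a*r+k = c*r+m) \<longleftrightarrow> (a = c \<and> k = m)"
proof
  assume h: "a*r+k = c*r+m"
  have "(a*r+k) div r = a" "(a*r+k) mod r = k" "(c*r+m) div r = c" "(c*r+m) mod r = m"
    using assms by auto
  then show "a = c \<and> k = m" using h by metis
qed auto

lemma Mmat_entry:
  assumes "i < q" "k < r"
  shows "Mmat q r w $$ (i,k) = w ^ (i + k)"
  using assms unfolding Mmat_def by (simp add: scalar_prod_def power_add)

lemma N0_entry:
  assumes "i < q" "j < \<nu> * r"
  shows "N0 q r \<nu> z $$ (i,j) = of_nat ((i + j mod r) choose (j div r)) * z ^ (i + j mod r - j div r)"
proof -
  have r: "0 < r" using assms by (cases r) auto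
  have fneq: "(\<lambda>w. Mmat q r w $$ (i, j mod r)) = (\<lambda>w. w ^ (i + j mod r))"
    using assms r by (simp add: Mmat_entry)
  have "N0 q r \<nu> z $$ (i,j) = (deriv ^^ (j div r)) (\<lambda>w. Mmat q r w $$ (i, j mod r)) z / fact (j div r)"
    using assms by (simp add: N0_def)
  also have "\<dots> = of_nat (fact (j div r)) * (of_nat ((i + j mod r) choose (j div r)) * z ^ (i + j mod r - j div r)) / of_nat (fact (j div r))"
    unfolding fneq deriv_pow_iter by (simp add: of_nat_mult mult.assoc)
  also have "\<dots> = of_nat ((i + j mod r) choose (j div r)) * z ^ (i + j mod r - j div r)"
    by (simp del: of_nat_fact)
  finally show ?thesis .
qed

lemma F_entry:
  assumes "k < r" "m < r - 1"
  shows "Fmat r w $$ (k,m) = (if k = m then - w else if k = m + 1 then 1 else 0)"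
  using assms unfolding Fmat_def by simp

lemma Fd_entry:
  assumes "k < r" "m < r - 1"
  shows "Fderiv r z $$ (k,m) = (if k = m then - 1 else 0)"
proof -
  have "(\<lambda>w. Fmat r w $$ (k,m)) = (\<lambda>w. if k = m then - w else if k = m + 1 then 1 else 0)"
    using assms by (simp add: F_entry)
  moreover have "deriv (\<lambda>w::complex. if k = m then - w else if k = m + 1 then 1 else 0) z = (if k = m then - 1 else 0)"
    by (cases "k = m") (auto intro!: DERIV_imp_deriv derivative_eq_intros)
  ultimately show ?thesis using assms unfolding Fderiv_def by simp
qed

lemma K_carrier: "Kmat \<nu> r z \<in> carrier_mat (\<nu> * r) (\<nu> * (r - 1))"
  unfolding Kmat_def kron_def Fmat_def Fderiv_def shift_mat_def by auto

lemma K_entry: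
  assumes l: "l < \<nu> * r" and j: "j < \<nu> * (r - 1)"
  shows "Kmat \<nu> r z $$ (l,j) =
    (if l = (j div (r-1))*r + j mod (r-1) then -z else 0)
  + (if l = (j div (r-1))*r + j mod (r-1) + 1 then 1 else 0)
  + (if 0 < j div (r-1) \<and> l = (j div (r-1) - 1)*r + j mod (r-1) then -1 else 0)"
proof -
  define c where "c = j div (r-1)"
  define m where "m = j mod (r-1)"
  define a where "a = l div r"
  define k where "k = l mod r"
  have r1: "0 < r - 1" using j by (cases "r - 1") auto
  have c: "c < \<nu>" unfolding c_def using j r1 by (simp add: less_mult_imp_div_less)
  have m: "m < r - 1" unfolding m_def using r1 by simp
  have a: "a < \<nu>" unfolding a_def using l r1 by (simp add: less_mult_imp_div_less)
  have k: "k < r" unfolding k_def using r1 by simp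
  have lak: "l = a * r + k" unfolding a_def k_def by simp
  have dims: "dim_row (Fmat r z) = r" "dim_col (Fmat r z) = r - 1"
     "dim_row (Fderiv r z) = r" "dim_col (Fderiv r z) = r - 1"
     "dim_row (shift_mat \<nu>) = \<nu>" "dim_col (shift_mat \<nu>) = \<nu>"
    unfolding Fmat_def Fderiv_def shift_mat_def by auto
  have "Kmat \<nu> r z $$ (l,j) = (1\<^sub>m \<nu> $$ (a, c)) * Fmat r z $$ (k, m) + shift_mat \<nu> $$ (a,c) * Fderiv r z $$ (k,m)"
    unfolding Kmat_def kron_def using l j dims
    by (simp add: a_def c_def k_def m_def)
  also have "\<dots> = (if a = c then 1 else 0) * (if k = m then - z else if k = m + 1 then 1 else 0)
       + (if c = a + 1 then 1 else 0) * (if k = m then - 1 else 0)"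
    using a c k m by (simp add: F_entry Fd_entry shift_mat_def)
  also have "\<dots> = (if l = c*r + m then -z else 0)
  + (if l = c*r + m + 1 then 1 else 0)
  + (if 0 < c \<and> l = (c - 1)*r + m then -1 else 0)"
  proof -
    have e1: "(l = c*r + m) \<longleftrightarrow> (a = c \<and> k = m)" unfolding lak
      using divmod_eq_iff[OF k, of m a c] m by simp
    have e2: "(l = c*r + m + 1) \<longleftrightarrow> (a = c \<and> k = m + 1)" unfolding lak
      using divmod_eq_iff[OF k, of "m+1" a c] m by simp
    have e3: "(0 < c \<and> l = (c - 1)*r + m) \<longleftrightarrow> (c = a + 1 \<and> k = m)" unfolding lak
      using divmod_eq_iff[OF k, of m a "c - 1"] m by auto
    show ?thesis unfolding e1 e2 e3 by auto
  qed
  finally show ?thesis unfolding c_def m_def .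
qed

lemma pascal_id:
  fixes z :: complex
  shows "of_nat (n choose c) * z ^ (n - c) * (- z) + of_nat (Suc n choose c) * z ^ (Suc n - c)
     + (if 0 < c then of_nat (n choose (c - 1)) * z ^ (n - (c - 1)) * (- 1) else 0) = 0"
proof (cases c)
  case 0 then show ?thesis by simp
next
  case (Suc d)
  show ?thesis
  proof (cases "d < n")
    case True
    then have "z * z ^ (n - Suc d) = z ^ (n - d)"
      by (metis Suc_diff_Suc power_Suc)
    then show ?thesis using Suc by (simp add: algebra_simps)
  next
    case False
    then have "n choose Suc d = 0" by simp
    then show ?thesis using Suc by (simp add: algebra_simps)
  qed
qed

lemma sum_delta_mult:
  fixes f :: "nat \<Rightarrow> complex"
  assumes "finite A"
  shows "(\<Sum>l\<in>A. f l * (if l = p then a else 0)) = (if p \<in> A then f p * a else 0)"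
proof -
  have "(\<Sum>l\<in>A. f l * (if l = p then a else 0)) = (\<Sum>l\<in>A. if l = p then f l * a else 0)"
    by (rule sum.cong) auto
  then show ?thesis using assms by (simp add: sum.delta)
qed

lemma N0K:
  assumes r: "0 < r"
  shows "N0 q r \<nu> z * Kmat \<nu> r z = 0\<^sub>m q (\<nu> * (r - 1))"
proof (rule eq_matI)
  have N0c: "N0 q r \<nu> z \<in> carrier_mat q (\<nu> * r)" unfolding N0_def by simp
  have Kc: "Kmat \<nu> r z \<in> carrier_mat (\<nu> * r) (\<nu> * (r - 1))" by (rule K_carrier)
  show "dim_row (N0 q r \<nu> z * Kmat \<nu> r z) = dim_row (0\<^sub>m q (\<nu> * (r - 1)) :: complex mat)"
    "dim_col (N0 q r \<nu> z * Kmat \<nu> r z) = dim_col (0\<^sub>m q (\<nu> * (r - 1)) :: complex mat)"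
    using N0c Kc by auto
  fix i j assume "i < dim_row (0\<^sub>m q (\<nu> * (r - 1)) :: complex mat)" "j < dim_col (0\<^sub>m q (\<nu> * (r - 1)) :: complex mat)"
  then have i: "i < q" and j: "j < \<nu> * (r - 1)" by auto
  define c where "c = j div (r-1)"
  define m where "m = j mod (r-1)"
  have r1: "0 < r - 1" using j by (cases "r - 1") auto
  have c: "c < \<nu>" unfolding c_def using j r1 by (simp add: less_mult_imp_div_less)
  have m: "m < r - 1" unfolding m_def using r1 by simp
  have cr: "c * r + r \<le> \<nu> * r" using c by (metis add.commute mult_Suc less_eq_Suc_le mult_le_mono1)
  define P1 where "P1 = c * r + m"
  define P2 where "P2 = c * r + m + 1"
  define P3 where "P3 = (c - 1) * r + m"
  have P1: "P1 < \<nu> * r" "P1 div r = c" "P1 mod r = m" unfolding P1_def using cr m by auto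
  have m1: "m + 1 < r" using m by simp
  have P2e: "P2 = (m + 1) + c * r" unfolding P2_def by simp
  have d1: "(m + 1 + c * r) div r = c + (m + 1) div r" by (rule div_mult_self1) (use r in simp)
  have d2: "(m + 1 + c * r) mod r = (m + 1) mod r" by (rule mod_mult_self1)
  have P2: "P2 < \<nu> * r" "P2 div r = c" "P2 mod r = m + 1"
    subgoal using cr m1 unfolding P2_def by linarith
    subgoal unfolding P2e d1 div_less[OF m1] by simp
    subgoal unfolding P2e d2 mod_less[OF m1] by simp
    done
  have P3a: "P3 < \<nu> * r" if "0 < c"
  proof -
    have "(c - 1) * r + r = c * r" using that by (cases c) auto
    then show ?thesis unfolding P3_def using cr m by linarith
  qed
  have m0: "m < r" using m by simp
  have P3e: "P3 = m + (c - 1) * r" unfolding P3_def by simp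
  have d3: "(m + (c - 1) * r) div r = (c - 1) + m div r" by (rule div_mult_self1) (use r in simp)
  have d4: "(m + (c - 1) * r) mod r = m mod r" by (rule mod_mult_self1)
  have P3: "0 < c \<Longrightarrow> P3 < \<nu> * r" "P3 div r = c - 1" "P3 mod r = m"
    using P3a d3 d4 div_less[OF m0] mod_less[OF m0] unfolding P3e by simp_all
  let ?N = "N0 q r \<nu> z"
  have "(?N * Kmat \<nu> r z) $$ (i,j) = (\<Sum>l<\<nu> * r. ?N $$ (i,l) * Kmat \<nu> r z $$ (l,j))"
    using i j N0c Kc by (simp add: scalar_prod_def lessThan_atLeast0)
  also have "\<dots> = (\<Sum>l<\<nu> * r. ?N $$ (i,l) * (if l = P1 then -z else 0))
     + (\<Sum>l<\<nu> * r. ?N $$ (i,l) * (if l = P2 then 1 else 0))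
     + (\<Sum>l<\<nu> * r. ?N $$ (i,l) * (if 0 < c \<and> l = P3 then -1 else 0))"
  proof -
    have KE: "Kmat \<nu> r z $$ (l,j) = (if l = P1 then -z else 0) + (if l = P2 then 1 else 0) + (if 0 < c \<and> l = P3 then -1 else 0)"
      if "l < \<nu> * r" for l
      using K_entry[OF that j] unfolding P1_def P2_def P3_def c_def m_def .
    show ?thesis
      unfolding sum.distrib[symmetric] distrib_left[symmetric]
      by (rule sum.cong) (simp_all only: KE lessThan_iff)
  qed
  also have "\<dots> = ?N $$ (i,P1) * (-z) + ?N $$ (i,P2) + (if 0 < c then ?N $$ (i,P3) * (-1) else 0)"
    using P1 P2 P3 by (cases "0 < c") (simp_all add: sum_delta_mult)
  also have "\<dots> = of_nat ((i + m) choose c) * z ^ (i + m - c) * (- z) + of_nat (Suc (i + m) choose c) * z ^ (Suc (i + m) - c)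
     + (if 0 < c then of_nat ((i + m) choose (c - 1)) * z ^ ((i + m) - (c - 1)) * (- 1) else 0)"
    using P1 P2 P3 i by (simp add: N0_entry)
  also have "\<dots> = 0" by (rule pascal_id)
  finally show "(?N * Kmat \<nu> r z) $$ (i,j) = 0\<^sub>m q (\<nu> * (r - 1)) $$ (i,j)" using i j by simp
qed

lemma K_col:
  assumes j: "j < \<nu> * (r - 1)"
  obtains c m where "c < \<nu>" "m < r - 1" "j = c * (r - 1) + m" "c * r + m + 1 < \<nu> * r"
    "\<And>l. l < \<nu> * r \<Longrightarrow> Kmat \<nu> r z $$ (l,j) = (if l = c*r + m then -z else 0)
       + (if l = c*r + m + 1 then 1 else 0) + (if 0 < c \<and> l = (c - 1)*r + m then -1 else 0)"
proof -
  define c where "c = j div (r-1)"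
  define m where "m = j mod (r-1)"
  have r1: "0 < r - 1" using j by (cases "r - 1") auto
  have c: "c < \<nu>" unfolding c_def using j r1 by (simp add: less_mult_imp_div_less)
  have m: "m < r - 1" unfolding m_def using r1 by simp
  have cr: "c * r + r \<le> \<nu> * r" using c by (metis add.commute mult_Suc less_eq_Suc_le mult_le_mono1)
  have "c * r + m + 1 < \<nu> * r" using cr m by linarith
  moreover have "j = c * (r - 1) + m" unfolding c_def m_def by (metis div_mult_mod_eq)
  ultimately show ?thesis using that[OF c m] K_entry[OF _ j, of _ z] unfolding c_def m_def by blast
qed

lemma K_inj:
  assumes x: "x \<in> carrier_vec (\<nu> * (r - 1))" and Kx: "Kmat \<nu> r z *\<^sub>v x = 0\<^sub>v (\<nu> * r)"
  shows "x = 0\<^sub>v (\<nu> * (r - 1))"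
proof -
  define \<sigma> where "\<sigma> j = (j div (r-1)) * r + j mod (r - 1) + 1" for j
  show ?thesis
  proof (rule inj_crit[OF K_carrier x Kx, of \<sigma> id])
    fix j assume j: "j < \<nu> * (r - 1)"
    obtain c m where cm: "c < \<nu>" "m < r - 1" "j = c * (r - 1) + m" "c * r + m + 1 < \<nu> * r"
      and KE: "\<And>l. l < \<nu> * r \<Longrightarrow> Kmat \<nu> r z $$ (l,j) = (if l = c*r + m then -z else 0)
       + (if l = c*r + m + 1 then 1 else 0) + (if 0 < c \<and> l = (c - 1)*r + m then -1 else 0)"
      using K_col[OF j] by metis
    have sj: "\<sigma> j = c * r + m + 1" unfolding \<sigma>_def cm(3) using cm(2) by simp
    show "\<sigma> j < \<nu> * r" using sj cm by simp
    have "(c - 1) * r + m < c * r + m + 1" if "0 < c"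
      using that by (cases c) auto
    then show "Kmat \<nu> r z $$ (\<sigma> j, j) \<noteq> 0" using sj cm KE[of "\<sigma> j"] by auto
    fix i assume i: "i < \<nu> * r" and nz: "Kmat \<nu> r z $$ (i, j) \<noteq> 0" and ne: "i \<noteq> \<sigma> j"
    have "(c - 1) * r + m < c * r + m + 1" if "0 < c"
      using that by (cases c) auto
    then show "id i < id (\<sigma> j)" using KE[OF i] nz ne sj by (auto split: if_splits)
  next
    show "inj_on (id \<circ> \<sigma>) {..<\<nu> * (r - 1)}"
    proof (rule inj_onI)
      fix j j' assume j: "j \<in> {..<\<nu> * (r - 1)}" and j': "j' \<in> {..<\<nu> * (r - 1)}" and eq: "(id \<circ> \<sigma>) j = (id \<circ> \<sigma>) j'"
      have r1: "0 < r - 1" using j by (cases "r - 1") auto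
      have "j mod (r-1) < r - 1" "j' mod (r-1) < r - 1" using r1 by simp_all
      then have "j mod (r-1) + 1 < r" "j' mod (r-1) + 1 < r" by linarith+
      then have "j div (r-1) = j' div (r-1) \<and> j mod (r-1) + 1 = j' mod (r-1) + 1"
        using divmod_eq_iff[of "j mod (r-1) + 1" r "j' mod (r-1) + 1" "j div (r-1)" "j' div (r-1)"] eq
        unfolding \<sigma>_def by (simp add: add.assoc)
      then show "j = j'" by (metis add_right_cancel div_mult_mod_eq)
    qed
  qed
qed

definition Rm :: "nat \<Rightarrow> nat \<Rightarrow> complex mat" where
  "Rm \<nu> r = mat (\<nu> * r) \<nu> (\<lambda>(i,c). if i = c * r then 1 else 0)"

definition Pm :: "nat \<Rightarrow> nat \<Rightarrow> complex \<Rightarrow> complex mat" where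
  "Pm \<nu> r z = mat (\<nu> * r) (\<nu> * r) (\<lambda>(i,j). if j < \<nu> * (r - 1) then Kmat \<nu> r z $$ (i,j)
      else Rm \<nu> r $$ (i, j - \<nu> * (r - 1)))"

lemma Rm_carrier: "Rm \<nu> r \<in> carrier_mat (\<nu> * r) \<nu>" unfolding Rm_def by simp
lemma Pm_carrier: "Pm \<nu> r z \<in> carrier_mat (\<nu> * r) (\<nu> * r)" unfolding Pm_def by simp

lemma nr_split: "0 < (r::nat) \<Longrightarrow> \<nu> * r = \<nu> * (r - 1) + \<nu>"
  by (cases r) (simp_all add: mult_Suc_right)

lemma mat_mult_entry:
  assumes A: "A \<in> carrier_mat n k" and B: "B \<in> carrier_mat k m" and i: "i < n" and j: "j < m"
  shows "(A * B) $$ (i,j) = (\<Sum>l<k. A $$ (i,l) * B $$ (l,j))"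
  using A B i j by (auto simp: scalar_prod_def lessThan_atLeast0 intro!: sum.cong)

lemma N0R_entry:
  assumes i: "i < q" and c: "c < \<nu>" and r: "0 < r"
  shows "(N0 q r \<nu> z * Rm \<nu> r) $$ (i,c) = of_nat (i choose c) * z ^ (i - c)"
proof -
  have cr: "c * r < \<nu> * r" using c r by simp
  have N0c: "N0 q r \<nu> z \<in> carrier_mat q (\<nu> * r)" unfolding N0_def by simp
  have "(N0 q r \<nu> z * Rm \<nu> r) $$ (i,c) = (\<Sum>l<\<nu> * r. N0 q r \<nu> z $$ (i,l) * Rm \<nu> r $$ (l,c))"
    by (rule mat_mult_entry[OF N0c Rm_carrier i c])
  also have "\<dots> = (\<Sum>l<\<nu> * r. N0 q r \<nu> z $$ (i,l) * (if l = c * r then 1 else 0))"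
    by (rule sum.cong) (use c in \<open>auto simp: Rm_def\<close>)
  also have "\<dots> = N0 q r \<nu> z $$ (i, c * r)" using cr by (simp add: sum_delta_mult)
  also have "\<dots> = of_nat (i choose c) * z ^ (i - c)" using N0_entry[OF i cr] r by simp
  finally show ?thesis .
qed

lemma N0R_inj:
  assumes r: "0 < r" and nq: "\<nu> \<le> q"
    and y: "y \<in> carrier_vec \<nu>" and Ry: "(N0 q r \<nu> z * Rm \<nu> r) *\<^sub>v y = 0\<^sub>v q"
  shows "y = 0\<^sub>v \<nu>"
proof -
  have C: "N0 q r \<nu> z * Rm \<nu> r \<in> carrier_mat q \<nu>"
    by (rule mult_carrier_mat[OF _ Rm_carrier]) (simp add: N0_def)
  have inj: "inj_on ((\<lambda>i. q - i) \<circ> id) {..<\<nu>}" using nq by (auto intro!: inj_onI)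
  have s: "id j < q" if "j < \<nu>" for j using that nq by simp
  have d: "(N0 q r \<nu> z * Rm \<nu> r) $$ (id j, j) \<noteq> 0" if j: "j < \<nu>" for j
    using N0R_entry[of j q j \<nu> r z] j nq r by simp
  have t: "q - i < q - id j" if i: "i < q" and j: "j < \<nu>" and nz: "(N0 q r \<nu> z * Rm \<nu> r) $$ (i, j) \<noteq> 0" and ne: "i \<noteq> id j" for i j
  proof -
    have "j \<le> i" using nz N0R_entry[OF i j r] by (cases "j \<le> i") auto
    then show ?thesis using ne i by simp
  qed
  show ?thesis by (rule inj_crit[OF C y Ry s inj d t])
qed

lemma sum_split_add: fixes a b :: nat and f :: "nat \<Rightarrow> 'a::comm_monoid_add" shows "(\<Sum>j<a+b. f j) = (\<Sum>j<a. f j) + (\<Sum>c<b. f (a + c))"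
  by (induction b) (simp_all add: add.assoc)

lemma Kd: "dim_row (Kmat \<nu> r z) = \<nu> * r" "dim_col (Kmat \<nu> r z) = \<nu> * (r - 1)"
  using K_carrier[of \<nu> r z] by auto
lemma Rd: "dim_row (Rm \<nu> r) = \<nu> * r" "dim_col (Rm \<nu> r) = \<nu>"
  using Rm_carrier[of \<nu> r] by auto
lemma Pd: "dim_row (Pm \<nu> r z) = \<nu> * r" "dim_col (Pm \<nu> r z) = \<nu> * r"
  using Pm_carrier[of \<nu> r z] by auto

lemma mult_vec_entry:
  assumes A: "A \<in> carrier_mat n m" and l: "l < n"
  shows "vec_index (A *\<^sub>v Matrix.vec m f) l = (\<Sum>j<m. A $$ (l,j) * f j)"
  using A l by (auto simp: scalar_prod_def lessThan_atLeast0 intro!: sum.cong)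

lemma mult_entry:
  assumes A: "A \<in> carrier_mat n m" and l: "l < n" and w: "w \<in> carrier_vec m"
  shows "vec_index (A *\<^sub>v w) l = (\<Sum>j<m. A $$ (l,j) * vec_index w j)"
  using A l w by (auto simp: scalar_prod_def lessThan_atLeast0 intro!: sum.cong)

lemma Pm_decomp:
  assumes r: "0 < r" and w: "w \<in> carrier_vec (\<nu> * r)"
  shows "Pm \<nu> r z *\<^sub>v w = Kmat \<nu> r z *\<^sub>v Matrix.vec (\<nu> * (r - 1)) (\<lambda>j. vec_index w j)
     + Rm \<nu> r *\<^sub>v Matrix.vec \<nu> (\<lambda>c. vec_index w (\<nu> * (r - 1) + c))"
proof (rule eq_vecI)
  fix l assume "l < dim_vec (Kmat \<nu> r z *\<^sub>v Matrix.vec (\<nu> * (r - 1)) (\<lambda>j. vec_index w j)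
     + Rm \<nu> r *\<^sub>v Matrix.vec \<nu> (\<lambda>c. vec_index w (\<nu> * (r - 1) + c)))"
  then have l: "l < \<nu> * r" by (simp only: dim_mult_mat_vec index_add_vec(2) Rd)
  have "vec_index (Pm \<nu> r z *\<^sub>v w) l = (\<Sum>j<\<nu> * r. Pm \<nu> r z $$ (l,j) * vec_index w j)"
    by (rule mult_entry[OF Pm_carrier l w])
  also have "\<dots> = (\<Sum>j<\<nu> * (r - 1). Pm \<nu> r z $$ (l,j) * vec_index w j) + (\<Sum>c<\<nu>. Pm \<nu> r z $$ (l,\<nu> * (r - 1) + c) * vec_index w (\<nu> * (r - 1) + c))"
    unfolding nr_split[OF r, of \<nu>] sum_split_add ..
  also have "\<dots> = (\<Sum>j<\<nu> * (r - 1). Kmat \<nu> r z $$ (l,j) * vec_index w j) + (\<Sum>c<\<nu>. Rm \<nu> r $$ (l, c) * vec_index w (\<nu> * (r - 1) + c))"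
  proof -
    have "\<nu> * (r - 1) + c < \<nu> * r" if "c < \<nu>" for c using nr_split[OF r, of \<nu>] that by linarith
    moreover have "j < \<nu> * r" if "j < \<nu> * (r - 1)" for j using nr_split[OF r, of \<nu>] that by linarith
    ultimately show ?thesis using l unfolding Pm_def
      by (intro arg_cong2[where f = "(+)"] sum.cong refl) (simp_all only: lessThan_iff index_mat split not_less le_add1 not_add_less1 add_diff_cancel_left' if_True if_False) 
  qed
  also have "\<dots> = vec_index (Kmat \<nu> r z *\<^sub>v Matrix.vec (\<nu> * (r - 1)) (\<lambda>j. vec_index w j)) l
     + vec_index (Rm \<nu> r *\<^sub>v Matrix.vec \<nu> (\<lambda>c. vec_index w (\<nu> * (r - 1) + c))) l"
  proof -
    show ?thesis by (simp only: mult_vec_entry[OF K_carrier l] mult_vec_entry[OF Rm_carrier l])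
  qed
  also have "\<dots> = vec_index (Kmat \<nu> r z *\<^sub>v Matrix.vec (\<nu> * (r - 1)) (\<lambda>j. vec_index w j)
     + Rm \<nu> r *\<^sub>v Matrix.vec \<nu> (\<lambda>c. vec_index w (\<nu> * (r - 1) + c))) l"
    by (rule index_add_vec(1)[symmetric]) (simp only: dim_mult_mat_vec Rd l)
  finally show "vec_index (Pm \<nu> r z *\<^sub>v w) l = vec_index (Kmat \<nu> r z *\<^sub>v Matrix.vec (\<nu> * (r - 1)) (\<lambda>j. vec_index w j)
     + Rm \<nu> r *\<^sub>v Matrix.vec \<nu> (\<lambda>c. vec_index w (\<nu> * (r - 1) + c))) l" .
qed (simp only: dim_mult_mat_vec index_add_vec(2) Rd Pd)

lemma mat_zero_vec: "A \<in> carrier_mat n m \<Longrightarrow> A *\<^sub>v 0\<^sub>v m = (0\<^sub>v n :: 'a::comm_ring_1 Matrix.vec)"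
  by (intro eq_vecI) (auto simp: scalar_prod_def)

lemma zero_mat_vec: "v \<in> carrier_vec m \<Longrightarrow> 0\<^sub>m n m *\<^sub>v v = (0\<^sub>v n :: 'a::comm_ring_1 Matrix.vec)"
  by (intro eq_vecI) (auto simp: scalar_prod_def)

lemma K_sigma:
  assumes j: "j < \<nu> * (r - 1)"
  defines "s \<equiv> (j div (r-1)) * r + j mod (r - 1) + 1"
  shows "s < \<nu> * r" "Kmat \<nu> r z $$ (s, j) \<noteq> 0"
    "\<And>i. i < \<nu> * r \<Longrightarrow> Kmat \<nu> r z $$ (i, j) \<noteq> 0 \<Longrightarrow> i \<noteq> s \<Longrightarrow> i < s"
    "s mod r = j mod (r - 1) + 1" "s div r = j div (r - 1)" "j mod (r - 1) + 1 < r"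
proof -
  obtain c m where cm: "c < \<nu>" "m < r - 1" "j = c * (r - 1) + m" "c * r + m + 1 < \<nu> * r"
    and KE: "\<And>l. l < \<nu> * r \<Longrightarrow> Kmat \<nu> r z $$ (l,j) = (if l = c*r + m then -z else 0)
     + (if l = c*r + m + 1 then 1 else 0) + (if 0 < c \<and> l = (c - 1)*r + m then -1 else 0)"
    using K_col[OF j] by metis
  have jm: "j mod (r - 1) = m" "j div (r - 1) = c" unfolding cm(3) using cm(2) by auto
  have sj: "s = c * r + m + 1" unfolding s_def jm by simp
  show "s < \<nu> * r" using sj cm by simp
  have lt: "(c - 1) * r + m < c * r + m + 1" if "0 < c"
    using that by (cases c) auto
  then show "Kmat \<nu> r z $$ (s, j) \<noteq> 0" using sj cm KE[of s] by auto
  show "i < s" if i: "i < \<nu> * r" and nz: "Kmat \<nu> r z $$ (i, j) \<noteq> 0" and ne: "i \<noteq> s" for i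
    using KE[OF i] nz ne sj lt by (auto split: if_splits)
  have m1: "m + 1 < r" using cm(2) by linarith
  show "j mod (r - 1) + 1 < r" using m1 jm by simp
  have e: "s = (m + 1) + c * r" using sj by simp
  have d1: "((m + 1) + c * r) div r = c + (m + 1) div r" by (rule div_mult_self1) (use m1 in simp)
  have d2: "((m + 1) + c * r) mod r = (m + 1) mod r" by (rule mod_mult_self1)
  show "s mod r = j mod (r - 1) + 1" unfolding e d2 jm using m1 by simp
  show "s div r = j div (r - 1)" unfolding e d1 jm using m1 by simp
qed

lemma Pm_entry_K:
  assumes l: "l < \<nu> * r" and j: "j < \<nu> * (r - 1)"
  shows "Pm \<nu> r z $$ (l,j) = Kmat \<nu> r z $$ (l,j)"
proof -
  have "\<nu> * (r - 1) \<le> \<nu> * r" by (rule mult_le_mono2) simp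
  then have "j < \<nu> * r" using j by linarith
  then show ?thesis unfolding Pm_def using l j by simp
qed

lemma Pm_entry_R:
  assumes r: "0 < r" and l: "l < \<nu> * r" and j: "j < \<nu> * r" and j2: "\<not> j < \<nu> * (r - 1)"
  shows "Pm \<nu> r z $$ (l,j) = (if l = (j - \<nu> * (r - 1)) * r then 1 else 0)"
proof -
  have "j - \<nu> * (r - 1) < \<nu>" using j j2 nr_split[OF r, of \<nu>] by linarith
  then show ?thesis unfolding Pm_def Rm_def using l j j2 by simp
qed

lemma Pm_inj:
  assumes r: "0 < r" and w: "w \<in> carrier_vec (\<nu> * r)" and Pw: "Pm \<nu> r z *\<^sub>v w = 0\<^sub>v (\<nu> * r)"
  shows "w = 0\<^sub>v (\<nu> * r)"
proof -
  define \<sigma> where "\<sigma> j = (if j < \<nu> * (r - 1) then (j div (r-1)) * r + j mod (r - 1) + 1 else (j - \<nu> * (r - 1)) * r)" for j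
  have sR: "(j - \<nu> * (r - 1)) < \<nu>" if "j < \<nu> * r" "\<not> j < \<nu> * (r - 1)" for j
    using that nr_split[OF r, of \<nu>] by linarith
  have s: "\<sigma> j < \<nu> * r" if j: "j < \<nu> * r" for j
  proof (cases "j < \<nu> * (r - 1)")
    case True then show ?thesis unfolding \<sigma>_def using K_sigma(1)[OF True] by simp
  next
    case False then show ?thesis unfolding \<sigma>_def using sR[OF j False] r by simp
  qed
  have d: "Pm \<nu> r z $$ (\<sigma> j, j) \<noteq> 0" if j: "j < \<nu> * r" for j
  proof (cases "j < \<nu> * (r - 1)")
    case True then show ?thesis using Pm_entry_K[OF s[OF j] True] K_sigma(2)[OF True, of z] unfolding \<sigma>_def by simp
  next
    case False then show ?thesis using Pm_entry_R[OF r s[OF j] j False] unfolding \<sigma>_def by simp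
  qed
  have t: "id i < id (\<sigma> j)" if i: "i < \<nu> * r" and j: "j < \<nu> * r" and nz: "Pm \<nu> r z $$ (i, j) \<noteq> 0" and ne: "i \<noteq> \<sigma> j" for i j
  proof (cases "j < \<nu> * (r - 1)")
    case True then show ?thesis using Pm_entry_K[OF i True] K_sigma(3)[OF True i, of z] nz ne unfolding \<sigma>_def by simp
  next
    case False then show ?thesis using Pm_entry_R[OF r i j False] nz ne unfolding \<sigma>_def by simp
  qed
  have inj: "inj_on (id \<circ> \<sigma>) {..<\<nu> * r}"
  proof (rule inj_onI)
    fix j j' assume j: "j \<in> {..<\<nu> * r}" and j': "j' \<in> {..<\<nu> * r}" and eq: "(id \<circ> \<sigma>) j = (id \<circ> \<sigma>) j'"
    have eq': "\<sigma> j = \<sigma> j'" using eq by simp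
    show "j = j'"
    proof (cases "j < \<nu> * (r - 1)"; cases "j' < \<nu> * (r - 1)")
      assume a: "j < \<nu> * (r - 1)" and b: "j' < \<nu> * (r - 1)"
      have "j div (r-1) = j' div (r-1)" "j mod (r-1) = j' mod (r-1)"
        using K_sigma(4,5)[OF a] K_sigma(4,5)[OF b] eq' a b unfolding \<sigma>_def by (metis add_right_cancel)+
      then show "j = j'" by (metis div_mult_mod_eq)
    next
      assume a: "j < \<nu> * (r - 1)" and b: "\<not> j' < \<nu> * (r - 1)"
      have "\<sigma> j mod r \<noteq> 0" using K_sigma(4)[OF a] a unfolding \<sigma>_def by simp
      moreover have "\<sigma> j' mod r = 0" using b unfolding \<sigma>_def by simp
      ultimately show "j = j'" using eq' by simp
    next
      assume a: "\<not> j < \<nu> * (r - 1)" and b: "j' < \<nu> * (r - 1)"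
      have "\<sigma> j' mod r \<noteq> 0" using K_sigma(4)[OF b] b unfolding \<sigma>_def by simp
      moreover have "\<sigma> j mod r = 0" using a unfolding \<sigma>_def by simp
      ultimately show "j = j'" using eq' by simp
    next
      assume a: "\<not> j < \<nu> * (r - 1)" and b: "\<not> j' < \<nu> * (r - 1)"
      have "j - \<nu> * (r - 1) = j' - \<nu> * (r - 1)" using eq' a b r unfolding \<sigma>_def by simp
      then show "j = j'" using a b by linarith
    qed
  qed
  show ?thesis by (rule inj_crit[OF Pm_carrier w Pw s inj d t])
qed

theorem proposition4p1:
  fixes q r \<nu> :: nat and z :: complex
  assumes "0 < q" and "0 < r" and "0 < \<nu>" and "\<nu> \<le> q"
  shows "vec_space.rank (\<nu> * r) (Kmat \<nu> r z) = \<nu> * (r - 1)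
       \<and> N0 q r \<nu> z * Kmat \<nu> r z = 0\<^sub>m q (\<nu> * (r - 1))
       \<and> vec_space.col_space (\<nu> * r) (Kmat \<nu> r z) = mat_kernel (N0 q r \<nu> z)"
proof (intro conjI)
  note r = \<open>0 < r\<close>
  have Kc: "Kmat \<nu> r z \<in> carrier_mat (\<nu> * r) (\<nu> * (r - 1))" by (rule K_carrier)
  have N0c: "N0 q r \<nu> z \<in> carrier_mat q (\<nu> * r)" unfolding N0_def by simp
  have Rc: "Rm \<nu> r \<in> carrier_mat (\<nu> * r) \<nu>" by (rule Rm_carrier)
  have Pc: "Pm \<nu> r z \<in> carrier_mat (\<nu> * r) (\<nu> * r)" by (rule Pm_carrier)
  show "vec_space.rank (\<nu> * r) (Kmat \<nu> r z) = \<nu> * (r - 1)"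
    by (rule inj_full_rank[OF Kc]) (rule K_inj)
  show NK: "N0 q r \<nu> z * Kmat \<nu> r z = 0\<^sub>m q (\<nu> * (r - 1))" by (rule N0K[OF r])
  interpret vec_space "TYPE(complex)" "\<nu> * r" .
  have cs: "col_space (Kmat \<nu> r z) = {y \<in> carrier_vec (\<nu> * r). \<exists>x\<in>carrier_vec (\<nu> * (r - 1)). Kmat \<nu> r z *\<^sub>v x = y}"
    using col_space_eq[OF Kc] Kc by simp
  show "col_space (Kmat \<nu> r z) = mat_kernel (N0 q r \<nu> z)"
  proof
    show "col_space (Kmat \<nu> r z) \<subseteq> mat_kernel (N0 q r \<nu> z)"
    proof
      fix y assume "y \<in> col_space (Kmat \<nu> r z)"
      then obtain x where y: "y \<in> carrier_vec (\<nu> * r)" and x: "x \<in> carrier_vec (\<nu> * (r - 1))"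
        and yx: "y = Kmat \<nu> r z *\<^sub>v x" unfolding cs by auto
      have "N0 q r \<nu> z *\<^sub>v y = (N0 q r \<nu> z * Kmat \<nu> r z) *\<^sub>v x"
        unfolding yx by (rule assoc_mult_mat_vec[symmetric, OF N0c Kc x])
      also have "\<dots> = 0\<^sub>v q" unfolding NK by (rule zero_mat_vec[OF x])
      finally show "y \<in> mat_kernel (N0 q r \<nu> z)" by (rule mat_kernelI[OF N0c y])
    qed
  next
    show "mat_kernel (N0 q r \<nu> z) \<subseteq> col_space (Kmat \<nu> r z)"
    proof
      fix v assume vk: "v \<in> mat_kernel (N0 q r \<nu> z)"
      have v: "v \<in> carrier_vec (\<nu> * r)" and Nv: "N0 q r \<nu> z *\<^sub>v v = 0\<^sub>v q"
        using mat_kernelD[OF N0c vk] by auto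
      have "det (Pm \<nu> r z) \<noteq> 0"
      proof
        assume "det (Pm \<nu> r z) = 0"
        then obtain u where "u \<in> carrier_vec (\<nu> * r)" "u \<noteq> 0\<^sub>v (\<nu> * r)" "Pm \<nu> r z *\<^sub>v u = 0\<^sub>v (\<nu> * r)"
          using det_0_iff_vec_prod_zero[OF Pc] by blast
        then show False using Pm_inj[OF r] by blast
      qed
      from det_non_zero_imp_unit[OF Pc this, unfolded Units_def, of "()"]
      obtain Q where Q: "Q \<in> carrier_mat (\<nu> * r) (\<nu> * r)" and PQ: "Pm \<nu> r z * Q = 1\<^sub>m (\<nu> * r)"
        by (auto simp: ring_mat_def)
      define w where "w = Q *\<^sub>v v"
      have w: "w \<in> carrier_vec (\<nu> * r)" unfolding w_def using Q v by simp
      have "Pm \<nu> r z *\<^sub>v w = (Pm \<nu> r z * Q) *\<^sub>v v" unfolding w_def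
        by (rule assoc_mult_mat_vec[symmetric, OF Pc Q v])
      then have Pw: "Pm \<nu> r z *\<^sub>v w = v" unfolding PQ using v by simp
      define x where "x = Matrix.vec (\<nu> * (r - 1)) (\<lambda>j. vec_index w j)"
      define y where "y = Matrix.vec \<nu> (\<lambda>c. vec_index w (\<nu> * (r - 1) + c))"
      have x: "x \<in> carrier_vec (\<nu> * (r - 1))" and y: "y \<in> carrier_vec \<nu>" unfolding x_def y_def by auto
      have vxy: "v = Kmat \<nu> r z *\<^sub>v x + Rm \<nu> r *\<^sub>v y"
        using Pm_decomp[OF r w, of z] Pw unfolding x_def y_def by simp
      have Kx: "Kmat \<nu> r z *\<^sub>v x \<in> carrier_vec (\<nu> * r)" using Kc x by simp
      have Ry: "Rm \<nu> r *\<^sub>v y \<in> carrier_vec (\<nu> * r)" using Rc y by simp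
      have "0\<^sub>v q = N0 q r \<nu> z *\<^sub>v (Kmat \<nu> r z *\<^sub>v x) + N0 q r \<nu> z *\<^sub>v (Rm \<nu> r *\<^sub>v y)"
        using Nv unfolding vxy by (simp only: mult_add_distrib_mat_vec[OF N0c Kx Ry])
      also have "N0 q r \<nu> z *\<^sub>v (Kmat \<nu> r z *\<^sub>v x) = 0\<^sub>v q"
        using assoc_mult_mat_vec[OF N0c Kc x] NK zero_mat_vec[OF x] by simp
      also have "N0 q r \<nu> z *\<^sub>v (Rm \<nu> r *\<^sub>v y) = (N0 q r \<nu> z * Rm \<nu> r) *\<^sub>v y"
        by (rule assoc_mult_mat_vec[symmetric, OF N0c Rc y])
      finally have "(N0 q r \<nu> z * Rm \<nu> r) *\<^sub>v y = 0\<^sub>v q"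
        using N0c Rc y by simp
      then have "y = 0\<^sub>v \<nu>" by (rule N0R_inj[OF r \<open>\<nu> \<le> q\<close> y])
      then have "Rm \<nu> r *\<^sub>v y = 0\<^sub>v (\<nu> * r)" using mat_zero_vec[OF Rc] by simp
      then have "v = Kmat \<nu> r z *\<^sub>v x" using vxy Kx by simp
      then show "v \<in> col_space (Kmat \<nu> r z)" unfolding cs using v x by auto
    qed
  qed
qed

end
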